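(* Let $\mathcal{T}=\langle\Sigma^*\times\mathcal{M},Q,I,F,\Delta\rangle$ be a real-time monoidal finite-state transducer with output monoid $\mathcal{M}=\langle M,\circ,e\rangle$. Let $\mathcal{A}^{sq}=\langle\mathcal{M}\times\mathcal{M},Q\times Q,I\times I,F\times F,\Delta_{sq}\rangle$ where $\Delta_{sq}=\{\langle\langle p_1,p_2\rangle,\langle m_1,m_2\rangle,\langle q_1,q_2\rangle\rangle:\exists a\in\Sigma\ \langle p_i,\langle a,m_i\rangle,q_i\rangle\in\Delta\text{ for }i=1,2\}$. Then $\mathcal{A}^{sq}$ is a squared output automaton for $\mathcal{T}$.
   Context: A real-time monoidal finite-state transducer has finite $\Delta\subseteq Q\times(\Sigma\times M)\times Q$. For a monoidal automaton with transition relation $\Delta$ over a monoid with unit $e$, the generalized transition relation $\Delta^*$ is the least set containing $\langle q,e,q\rangle$ for every state $q$ and closed under: $\langle q_1,w,q_2\rangle\in\Delta^*$, $\langle q_2,a,q_3\rangle\in\Delta$ imply $\langle q_1,w\circ a,q_3\rangle\in\Delta^*$ (for the transducer the unit is $\langle\varepsilon,e\rangle$; for $\mathcal{M}\times\mathcal{M}$ it is $\langle e,e\rangle$ with componentwise product). A monoidal automaton $\langle\mathcal{M}\times\mathcal{M},Q\times Q,I\times I,F\times F,\Delta_2\rangle$ with finite $\Delta_2$ is a squared output automaton for $\mathcal{T}$ if for all $p_1,p_2,q_1,q_2\in Q$ and $m,n\in M$: $\langle\langle p_1,p_2\rangle,\langle m,n\rangle,\langle q_1,q_2\rangle\rangle\in\Delta_2^*$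 iff there is $u\in\Sigma^*$ with $\langle p_1,\langle u,m\rangle,q_1\rangle\in\Delta^*$ and $\langle p_2,\langle u,n\rangle,q_2\rangle\in\Delta^*$. *)

theory Defs
  imports Main
begin

definition monoid_on :: "('m \<Rightarrow> 'm \<Rightarrow> 'm) \<Rightarrow> 'm \<Rightarrow> bool" where
  "monoid_on mult e \<longleftrightarrow> (\<forall>a b c. mult (mult a b) c = mult a (mult b c))
     \<and> (\<forall>a. mult e a = a) \<and> (\<forall>a. mult a e = a)"

inductive_set gen_trans ::
  "'q set \<Rightarrow> ('l \<Rightarrow> 'l \<Rightarrow> 'l) \<Rightarrow> 'l \<Rightarrow> ('q \<times> 'l \<times> 'q) set \<Rightarrow> ('q \<times> 'l \<times> 'q) set"
  for Q mult e D where
  refl: "q \<in> Q \<Longrightarrow> (q, e, q) \<in> gen_trans Q mult e D"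
| step: "(q1, w, q2) \<in> gen_trans Q mult e D \<Longrightarrow> (q2, a, q3) \<in> D
         \<Longrightarrow> (q1, mult w a, q3) \<in> gen_trans Q mult e D"

definition real_time_transducer ::
  "('m \<Rightarrow> 'm \<Rightarrow> 'm) \<Rightarrow> 'm \<Rightarrow> 'q set \<Rightarrow> 'q set \<Rightarrow> 'q set \<Rightarrow> ('q \<times> ('s \<times> 'm) \<times> 'q) set \<Rightarrow> bool" where
  "real_time_transducer mult e Q I F D \<longleftrightarrow> monoid_on mult e \<and> finite Q \<and> I \<subseteq> Q \<and> F \<subseteq> Q
     \<and> finite D \<and> (\<forall>(p, l, q) \<in> D. p \<in> Q \<and> q \<in> Q)"

definition tr_mult :: "('m \<Rightarrow> 'm \<Rightarrow> 'm) \<Rightarrow> 's list \<times> 'm \<Rightarrow> 's list \<times> 'm \<Rightarrow> 's list \<times> 'm" where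
  "tr_mult mult x y = (fst x @ fst y, mult (snd x) (snd y))"

definition embed_trans :: "('q \<times> ('s \<times> 'm) \<times> 'q) set \<Rightarrow> ('q \<times> ('s list \<times> 'm) \<times> 'q) set" where
  "embed_trans D = {(p, ([a], m), q) | p a m q. (p, (a, m), q) \<in> D}"

definition tr_gen :: "('m \<Rightarrow> 'm \<Rightarrow> 'm) \<Rightarrow> 'm \<Rightarrow> 'q set \<Rightarrow> ('q \<times> ('s \<times> 'm) \<times> 'q) set
   \<Rightarrow> ('q \<times> ('s list \<times> 'm) \<times> 'q) set" where
  "tr_gen mult e Q D = gen_trans Q (tr_mult mult) ([], e) (embed_trans D)"

definition pair_mult :: "('m \<Rightarrow> 'm \<Rightarrow> 'm) \<Rightarrow> 'm \<times> 'm \<Rightarrow> 'm \<times> 'm \<Rightarrow> 'm \<times> 'm" where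
  "pair_mult mult x y = (mult (fst x) (fst y), mult (snd x) (snd y))"

definition squared_output_automaton ::
  "('m \<Rightarrow> 'm \<Rightarrow> 'm) \<Rightarrow> 'm \<Rightarrow> 'q set \<Rightarrow> ('q \<times> ('s \<times> 'm) \<times> 'q) set
   \<Rightarrow> (('q \<times> 'q) \<times> ('m \<times> 'm) \<times> ('q \<times> 'q)) set \<Rightarrow> bool" where
  "squared_output_automaton mult e Q D D2 \<longleftrightarrow>
     finite D2 \<and> (\<forall>(p, l, q) \<in> D2. p \<in> Q \<times> Q \<and> q \<in> Q \<times> Q) \<and>
     (\<forall>p1\<in>Q. \<forall>p2\<in>Q. \<forall>q1\<in>Q. \<forall>q2\<in>Q. \<forall>m n.
        ((p1, p2), (m, n), (q1, q2)) \<in> gen_trans (Q \<times> Q) (pair_mult mult) (e, e) D2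
        \<longleftrightarrow> (\<exists>u. (p1, (u, m), q1) \<in> tr_gen mult e Q D \<and> (p2, (u, n), q2) \<in> tr_gen mult e Q D))"

definition delta_sq :: "('q \<times> ('s \<times> 'm) \<times> 'q) set \<Rightarrow> (('q \<times> 'q) \<times> ('m \<times> 'm) \<times> ('q \<times> 'q)) set" where
  "delta_sq D = {((p1, p2), (m1, m2), (q1, q2)) | p1 p2 m1 m2 q1 q2.
      \<exists>a. (p1, (a, m1), q1) \<in> D \<and> (p2, (a, m2), q2) \<in> D}"

end

theory Submission
  imports Defs
begin

lemma fwd:
  assumes "(P, L, R) \<in> gen_trans (Q \<times> Q) (pair_mult mult) (e, e) (delta_sq D)"
  shows "\<exists>u. (fst P, (u, fst L), fst R) \<in> tr_gen mult e Q D
           \<and> (snd P, (u, snd L), snd R) \<in> tr_gen mult e Q D"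
  using assms
proof (induction rule: gen_trans.induct)
  case (refl q)
  then show ?case unfolding tr_gen_def
    by (intro exI[of _ "[]"]) (auto intro: gen_trans.refl)
next
  case (step q1 w q2 a q3)
  then obtain u where u: "(fst q1, (u, fst w), fst q2) \<in> tr_gen mult e Q D"
    "(snd q1, (u, snd w), snd q2) \<in> tr_gen mult e Q D" by auto
  from step(2) obtain b where b: "(fst q2, (b, fst a), fst q3) \<in> D" "(snd q2, (b, snd a), snd q3) \<in> D"
    unfolding delta_sq_def by auto
  have "(fst q1, tr_mult mult (u, fst w) ([b], fst a), fst q3) \<in> tr_gen mult e Q D"
    using u(1) b(1) unfolding tr_gen_def embed_trans_def by (auto intro: gen_trans.step)
  moreover have "(snd q1, tr_mult mult (u, snd w) ([b], snd a), snd q3) \<in> tr_gen mult e Q D"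
    using u(2) b(2) unfolding tr_gen_def embed_trans_def by (auto intro: gen_trans.step)
  ultimately show ?case
    by (intro exI[of _ "u @ [b]"]) (simp add: tr_mult_def pair_mult_def)
qed

lemma inv_tr:
  assumes "(p, (u, n), q) \<in> tr_gen mult e Q D"
  shows "(u = [] \<and> n = e \<and> p = q \<and> p \<in> Q) \<or>
    (\<exists>w b n' nb q'. u = w @ [b] \<and> n = mult n' nb \<and> (p, (w, n'), q') \<in> tr_gen mult e Q D
       \<and> (q', (b, nb), q) \<in> D)"
  using assms unfolding tr_gen_def
  by (cases rule: gen_trans.cases) (auto simp: tr_mult_def embed_trans_def)

lemma bwd:
  assumes "(P, L, R) \<in> tr_gen mult e Q D"
  shows "\<And>p2 q2 n. (p2, (fst L, n), q2) \<in> tr_gen mult e Q D \<Longrightarrow>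
    ((P, p2), (snd L, n), (R, q2)) \<in> gen_trans (Q \<times> Q) (pair_mult mult) (e, e) (delta_sq D)"
  using assms unfolding tr_gen_def
proof (induction rule: gen_trans.induct)
  case (refl q)
  from inv_tr[OF refl(2)[folded tr_gen_def]] refl(1) show ?case
    by (auto intro: gen_trans.refl)
next
  case (step q1 w q2 a q3 p2 qq2 n)
  from step(2) obtain c ma where a: "a = ([c], ma)" "(q2, (c, ma), q3) \<in> D"
    unfolding embed_trans_def by auto
  from inv_tr[OF step(4)[folded tr_gen_def]] a obtain n' nb q' where
    h: "n = mult n' nb" "(p2, (fst w, n'), q') \<in> tr_gen mult e Q D" "(q', (c, nb), qq2) \<in> D"
    by (auto simp: tr_mult_def)
  have ih: "((q1, p2), (snd w, n'), (q2, q')) \<in> gen_trans (Q \<times> Q) (pair_mult mult) (e, e) (delta_sq D)"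
    using step(3) h(2) by (auto simp: tr_gen_def)
  have "((q2, q'), (ma, nb), (q3, qq2)) \<in> delta_sq D"
    using a(2) h(3) unfolding delta_sq_def by blast
  from gen_trans.step[OF ih this] show ?case
    using a h by (simp add: tr_mult_def pair_mult_def del: pair_mult_def[abs_def]) (simp only: pair_mult_def[symmetric] fst_conv snd_conv)
qed

theorem proposition2:
  fixes mult :: "'m \<Rightarrow> 'm \<Rightarrow> 'm" and e :: 'm and Q I F :: "'q set"
    and D :: "('q \<times> ('s \<times> 'm) \<times> 'q) set"
  assumes "real_time_transducer mult e Q I F D"
  shows "squared_output_automaton mult e Q D (delta_sq D)"
proof -
  have fD: "finite D" and DQ: "\<forall>(p, l, q) \<in> D. p \<in> Q \<and> q \<in> Q"
    using assms unfolding real_time_transducer_def by auto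
  have sub: "delta_sq D \<subseteq> (\<lambda>((p1,(a,m1),q1),(p2,(b,m2),q2)). ((p1,p2),(m1,m2),(q1,q2))) ` (D \<times> D)"
  proof
    fix x assume "x \<in> delta_sq D"
    then obtain p1 p2 m1 m2 q1 q2 a where x: "x = ((p1, p2), (m1, m2), (q1, q2))"
      "(p1, (a, m1), q1) \<in> D" "(p2, (a, m2), q2) \<in> D" unfolding delta_sq_def by blast
    show "x \<in> (\<lambda>((p1,(a,m1),q1),(p2,(b,m2),q2)). ((p1,p2),(m1,m2),(q1,q2))) ` (D \<times> D)"
      using x by (intro image_eqI[of _ _ "((p1, (a, m1), q1), (p2, (a, m2), q2))"]) auto
  qed
  have "finite (delta_sq D)"
    using finite_subset[OF sub] fD by auto
  moreover have "\<forall>(p, l, q) \<in> delta_sq D. p \<in> Q \<times> Q \<and> q \<in> Q \<times> Q"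
    using DQ unfolding delta_sq_def by fastforce
  moreover have "\<forall>p1\<in>Q. \<forall>p2\<in>Q. \<forall>q1\<in>Q. \<forall>q2\<in>Q. \<forall>m n.
        ((p1, p2), (m, n), (q1, q2)) \<in> gen_trans (Q \<times> Q) (pair_mult mult) (e, e) (delta_sq D)
        \<longleftrightarrow> (\<exists>u. (p1, (u, m), q1) \<in> tr_gen mult e Q D \<and> (p2, (u, n), q2) \<in> tr_gen mult e Q D)"
  proof (intro ballI allI iffI)
    fix p1 p2 q1 q2 m n
    assume "((p1, p2), (m, n), (q1, q2)) \<in> gen_trans (Q \<times> Q) (pair_mult mult) (e, e) (delta_sq D)"
    from fwd[OF this] show "\<exists>u. (p1, (u, m), q1) \<in> tr_gen mult e Q D \<and> (p2, (u, n), q2) \<in> tr_gen mult e Q D"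
      by simp
  next
    fix p1 p2 q1 q2 m n
    assume "\<exists>u. (p1, (u, m), q1) \<in> tr_gen mult e Q D \<and> (p2, (u, n), q2) \<in> tr_gen mult e Q D"
    then obtain u where "(p1, (u, m), q1) \<in> tr_gen mult e Q D" "(p2, (u, n), q2) \<in> tr_gen mult e Q D"
      by blast
    from bwd[OF this(1)] this(2) show "((p1, p2), (m, n), (q1, q2)) \<in> gen_trans (Q \<times> Q) (pair_mult mult) (e, e) (delta_sq D)"
      by simp
  qed
  ultimately show ?thesis unfolding squared_output_automaton_def by blast
qed

end
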